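(* For every integer $n\ge 0$, $$\Phi^{(4)}[aq^n; b; c, c'; x, y] = \sum_{k=0}^n \sum_{i=0}^k \begin{bmatrix} n \\ k \end{bmatrix} \begin{bmatrix} k \\ i \end{bmatrix} \frac{(b; q)_k}{(c; q)_{k-i} (c'; q)_i} q^{2\binom{k}{2}} a^k x^{k-i} y^i\, \Phi^{(4)}[aq^k; bq^k; cq^{k-i}, c'q^i; xq^i, y]$$ and $$\Phi^{(4)}[aq^{-n}; b; c, c'; x, y] = \sum_{k=0}^n \sum_{i=0}^k \begin{bmatrix} n \\ k \end{bmatrix} \begin{bmatrix} k \\ i \end{bmatrix} \frac{(b; q)_k}{(c; q)_{k-i} (c'; q)_i} q^{\binom{k}{2} - nk} (-a)^k x^{k-i} y^i\, \Phi^{(4)}[a; bq^k; cq^{k-i}, c'q^i; xq^i, y].$$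
   Context: Let $q$ be a complex number with $0<|q|<1$. For complex $z$ and integer $m\ge 0$, $(z;q)_m=\prod_{j=0}^{m-1}(1-zq^j)$, with $(z;q)_0=1$. For integers $0\le k\le n$, $\begin{bmatrix} n \\ k \end{bmatrix}=\frac{(q;q)_n}{(q;q)_k(q;q)_{n-k}}$ is the $q$-binomial coefficient. The $q$-Appell function $\Phi^{(4)}$ is $$\Phi^{(4)}[a; b; c, c'; x, y] = \sum_{m, n \geq 0} \frac{(a; q)_{m+n} (b; q)_{m+n}}{(q; q)_m (q; q)_n (c; q)_m (c'; q)_n} x^m y^n.$$ Identities are understood as identities of power series in $x,y$ (formal, or convergent for small $|x|,|y|$), with complex parameters chosen so that no denominator occurring vanishes. *)

theory Defs
  imports Complex_Main "HOL-Computational_Algebra.Formal_Power_Series"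
begin

definition qpoch :: "complex \<Rightarrow> complex \<Rightarrow> nat \<Rightarrow> complex" where
  "qpoch z q m = (\<Prod>j<m. 1 - z * q ^ j)"

text \<open>Gaussian q-binomial coefficient [n choose k]_q (used for 0 \<le> k \<le> n).\<close>
definition qbinom :: "complex \<Rightarrow> nat \<Rightarrow> nat \<Rightarrow> complex" where
  "qbinom q n k = qpoch q q n / (qpoch q q k * qpoch q q (n - k))"

text \<open>Formal power series in two variables x, y: complex fps fps, where the
  outer variable is x and the inner variable is y.\<close>
abbreviation fpsX2 :: "complex fps fps" where "fpsX2 \<equiv> fps_X"
abbreviation fpsY2 :: "complex fps fps" where "fpsY2 \<equiv> fps_const fps_X"
abbreviation fpsC2 :: "complex \<Rightarrow> complex fps fps" where "fpsC2 z \<equiv> fps_const (fps_const z)"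

text \<open>q-Appell function Phi^(4)[a; b; c, c'; u x, v y] as a formal power series
  in x, y (the scalars u, v realise substitutions such as x \<mapsto> x q^i):
  coefficient of x^m y^n is
  (a;q)_{m+n} (b;q)_{m+n} / ((q;q)_m (q;q)_n (c;q)_m (c';q)_n) u^m v^n.\<close>
definition Phi4 :: "complex \<Rightarrow> complex \<Rightarrow> complex \<Rightarrow> complex \<Rightarrow> complex \<Rightarrow> complex \<Rightarrow> complex \<Rightarrow> complex fps fps" where
  "Phi4 q a b c c' u v = Abs_fps (\<lambda>m. Abs_fps (\<lambda>n.
      qpoch a q (m + n) * qpoch b q (m + n)
      / (qpoch q q m * qpoch q q n * qpoch c q m * qpoch c' q n) * u ^ m * v ^ n))"

end

theory Submission
  imports Defs
begin
unbundle fps_syntax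

lemma qpoch_0[simp]: "qpoch z q 0 = 1" by (simp add: qpoch_def)
lemma qpoch_Suc: "qpoch z q (Suc m) = qpoch z q m * (1 - z * q ^ m)"
  by (simp add: qpoch_def)
lemma qpoch_add: "qpoch z q (m + k) = qpoch z q m * qpoch (z * q ^ m) q k"
  by (induction k) (simp_all add: qpoch_Suc power_add mult.assoc)

lemma qpoch_nz:
  assumes "\<And>j. z * q ^ j \<noteq> 1" shows "qpoch z q m \<noteq> 0"
  using assms by (simp add: qpoch_def)

lemma qq_nz:
  fixes q :: complex assumes "norm q < 1" shows "qpoch q q m \<noteq> 0"
proof (rule qpoch_nz)
  fix j
  have "norm (q * q ^ j) = norm q ^ Suc j" by (simp add: norm_mult norm_power)
  also have "\<dots> < 1" using assms power_less_one_iff[of "norm q" "Suc j"] by simp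
  finally show "q * q ^ j \<noteq> 1" by auto
qed

lemma choose2_add: "(i + j) choose 2 = (i choose 2) + (j choose 2) + i * j"
proof (induction j)
  case 0 then show ?case by simp
next
  case (Suc j)
  have "Suc (i + j) choose 2 = ((i + j) choose 2) + (i + j)"
    by (simp add: numeral_2_eq_2)
  moreover have "Suc j choose 2 = (j choose 2) + j" by (simp add: numeral_2_eq_2)
  ultimately show ?case using Suc by simp
qed

definition G :: "complex \<Rightarrow> nat \<Rightarrow> nat \<Rightarrow> complex" where
  "G q L k = (if k \<le> L then qpoch q q L / (qpoch q q k * qpoch q q (L - k)) else 0)"

definition E :: "complex \<Rightarrow> nat \<Rightarrow> nat \<Rightarrow> complex" where
  "E q n k = (\<Prod>j<k. 1 - q ^ (n - j))"

lemma G_0: "qpoch q q L \<noteq> 0 \<Longrightarrow> G q L 0 = 1"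
  by (simp add: G_def)
lemma G_diag: "qpoch q q L \<noteq> 0 \<Longrightarrow> G q L L = 1"
  unfolding G_def by (simp del: qpoch_def)
lemma z2: "(0::nat) choose 2 = 0" by simp

lemma alg_pascal:
  fixes A B P x y q :: complex
  assumes "A \<noteq> 0" "B \<noteq> 0" "u \<noteq> 0" "v \<noteq> 0" "u = 1 - q*x" "v = 1 - q*y"
  shows "P*(1 - q*(x*q*y)) / (A*u*(B*v)) * x = P/(A*u*B)*x + x*q*y*(P/(A*(B*v)))"
proof -
  have "P*(1 - q*(x*q*y)) * x = P*x*v + x*q*y*P*u" unfolding assms(5,6) by algebra
  moreover have "P/(A*u*B)*x + x*q*y*(P/(A*(B*v))) = (P*x*v + x*q*y*P*u)/(A*u*(B*v))"
    using assms(1-4) by (simp add: field_simps)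
  ultimately show ?thesis by simp
qed

lemma G_Pascal:
  assumes Q: "\<And>m. qpoch q q m \<noteq> 0"
  shows "G q (Suc M) (Suc k) * q ^ k = G q M (Suc k) * q ^ k + q ^ M * G q M k"
proof (cases "Suc k \<le> M")
  case True
  define r where "r = M - Suc k"
  have M: "M = Suc k + r" using True r_def by simp
  have n1: "1 - q * q ^ k \<noteq> 0" using Q[of "Suc k"] by (simp add: qpoch_Suc)
  have n2: "1 - q * q ^ r \<noteq> 0" using Q[of "Suc r"] by (simp add: qpoch_Suc)
  have n3: "1 - q * q ^ M \<noteq> 0" using Q[of "Suc M"] by (simp add: qpoch_Suc)
  have e: "Suc M - Suc k = Suc r" "M - Suc k = r" "M - k = Suc r" using M by auto
  have qM: "q ^ M = q ^ k * q * q ^ r" using M by (simp add: power_add)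
  have g1: "G q (Suc M) (Suc k) = qpoch q q M * (1 - q*q^M) / (qpoch q q k * (1 - q*q^k) * (qpoch q q r * (1 - q*q^r)))"
    using True by (simp add: G_def e qpoch_Suc)
  have g2: "G q M (Suc k) = qpoch q q M / (qpoch q q k * (1 - q*q^k) * qpoch q q r)"
    using True by (simp add: G_def e qpoch_Suc)
  have g3: "G q M k = qpoch q q M / (qpoch q q k * (qpoch q q r * (1 - q*q^r)))"
    using True by (simp add: G_def e qpoch_Suc)
  show ?thesis unfolding g1 g2 g3 qM
    by (rule alg_pascal) (use Q n1 n2 in auto)
next
  case False
  then show ?thesis
    using Q by (cases "k = M") (auto simp: G_def)
qed

definition H :: "complex \<Rightarrow> nat \<Rightarrow> complex \<Rightarrow> complex fps" where
  "H q M s = (\<Prod>j<M. 1 + fps_const (s * q ^ j) * fps_X)"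

lemma H_nth:
  assumes Q: "\<And>m. qpoch q q m \<noteq> 0"
  shows "H q M s $ k = G q M k * q ^ (k choose 2) * s ^ k"
proof (induction M arbitrary: k)
  case 0
  then show ?case using Q by (simp add: H_def G_def z2)
next
  case (Suc M)
  have "H q (Suc M) s = H q M s + fps_const (s * q ^ M) * (fps_X * H q M s)"
    by (simp add: H_def algebra_simps)
  then have "H q (Suc M) s $ k = H q M s $ k + s * q ^ M * (fps_X * H q M s) $ k"
    by simp
  also have "\<dots> = G q (Suc M) k * q ^ (k choose 2) * s ^ k"
  proof (cases k)
    case 0 then show ?thesis by (simp add: Suc fps_X_power_mult_nth[of 1, simplified] G_0 Q)
  next
    case (Suc k')
    have c: "Suc k' choose 2 = (k' choose 2) + k'" by (simp add: numeral_2_eq_2)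
    have x: "(fps_X * H q M s) $ Suc k' = H q M s $ k'"
      using fps_X_power_mult_nth[of 1 "H q M s" "Suc k'"] by simp
    have "H q M s $ k + s * q ^ M * (fps_X * H q M s) $ k
       = G q M (Suc k') * q ^ (k' choose 2) * q ^ k' * s ^ Suc k' + s * q ^ M * (G q M k' * q ^ (k' choose 2) * s ^ k')"
      unfolding Suc x Suc.IH c power_add by simp
    also have "\<dots> = (G q M (Suc k') * q ^ k' + q ^ M * G q M k') * q ^ (k' choose 2) * s ^ Suc k'"
      by (simp add: algebra_simps)
    also have "\<dots> = G q (Suc M) k * q ^ (k choose 2) * s ^ k"
      unfolding G_Pascal[OF Q, of M k', symmetric] Suc c power_add by (simp add: algebra_simps)
    finally show ?thesis .
  qed
  finally show ?case .
qed

lemma H_split: "H q (M + N) s = H q M s * H q N (s * q ^ M)"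
  by (induction N) (simp_all add: H_def power_add mult.assoc)

lemma vand:
  assumes Q: "\<And>m. qpoch q q m \<noteq> 0" and q0: "q \<noteq> 0"
  shows "(\<Sum>i\<le>k. if k - i \<le> M \<and> i \<le> N then qbinom q k i * q ^ (i * (M - (k - i)))
            / (qpoch q q (M - (k - i)) * qpoch q q (N - i)) else 0)
         = qpoch q q k * G q (M + N) k / (qpoch q q M * qpoch q q N)"
proof -
  define K where "K = qpoch q q M * qpoch q q N / qpoch q q k"
  have K0: "K \<noteq> 0" using Q by (simp add: K_def)
  have h: "H q (M + N) 1 = H q N (q ^ M) * H q M 1" using H_split[of q M N 1] by (simp add: mult.commute)
  have "G q (M + N) k * q ^ (k choose 2) = (\<Sum>i=0..k. H q N (q ^ M) $ i * H q M 1 $ (k - i))"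
    using arg_cong[OF h, of "\<lambda>f. f $ k"] H_nth[OF Q] by (simp add: fps_mult_nth)
  also have "\<dots> = (\<Sum>i\<le>k. q ^ (k choose 2) * K * (if k - i \<le> M \<and> i \<le> N then qbinom q k i * q ^ (i * (M - (k - i)))
            / (qpoch q q (M - (k - i)) * qpoch q q (N - i)) else 0))"
    unfolding atLeast0AtMost
  proof (rule sum.cong[OF refl])
    fix i assume "i \<in> {..k}"
    then have ik: "i \<le> k" by simp
    show "H q N (q ^ M) $ i * H q M 1 $ (k - i) = q ^ (k choose 2) * K * (if k - i \<le> M \<and> i \<le> N then qbinom q k i * q ^ (i * (M - (k - i)))
            / (qpoch q q (M - (k - i)) * qpoch q q (N - i)) else 0)"
    proof (cases "k - i \<le> M \<and> i \<le> N")
      case True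
      have ex: "(i choose 2) + M * i + ((k - i) choose 2) = (k choose 2) + i * (M - (k - i))"
      proof -
        have "k choose 2 = (i choose 2) + ((k - i) choose 2) + i * (k - i)"
          using choose2_add[of i "k - i"] ik by simp
        moreover have "M * i = i * (k - i) + i * (M - (k - i))"
          using True by (simp add: add_mult_distrib2[symmetric] mult.commute)
        ultimately show ?thesis by simp
      qed
      have pw: "q ^ (i choose 2) * (q ^ M) ^ i * q ^ ((k - i) choose 2) = q ^ (k choose 2) * q ^ (i * (M - (k - i)))"
        using arg_cong[OF ex, of "\<lambda>e. q ^ e"] by (simp add: power_add power_mult mult.commute)
      have "H q N (q ^ M) $ i * H q M 1 $ (k - i)
          = G q N i * G q M (k - i) * (q ^ (i choose 2) * (q ^ M) ^ i * q ^ ((k - i) choose 2))"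
        using H_nth[OF Q] by simp
      also have "\<dots> = G q N i * G q M (k - i) * (q ^ (k choose 2) * q ^ (i * (M - (k - i))))"
        by (simp only: pw)
      also have "\<dots> = q ^ (k choose 2) * K * (qbinom q k i * q ^ (i * (M - (k - i)))
            / (qpoch q q (M - (k - i)) * qpoch q q (N - i)))"
        using True ik Q by (simp add: G_def K_def qbinom_def field_simps)
      finally show ?thesis using True by simp
    next
      case False
      then show ?thesis using H_nth[OF Q] by (auto simp: G_def)
    qed
  qed
  also have "\<dots> = q ^ (k choose 2) * K * (\<Sum>i\<le>k. if k - i \<le> M \<and> i \<le> N then qbinom q k i * q ^ (i * (M - (k - i)))
            / (qpoch q q (M - (k - i)) * qpoch q q (N - i)) else 0)"
    by (simp add: sum_distrib_left)
  finally have "G q (M + N) k = K * (\<Sum>i\<le>k. if k - i \<le> M \<and> i \<le> N then qbinom q k i * q ^ (i * (M - (k - i)))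
            / (qpoch q q (M - (k - i)) * qpoch q q (N - i)) else 0)"
    using q0 by (simp add: mult.assoc)
  then show ?thesis using Q K0 unfolding K_def by (simp add: field_simps)
qed

lemma qpoch_Suc_left: "qpoch z q (Suc m) = (1 - z) * qpoch (z * q) q m"
  using qpoch_add[of z q 1 m] by (simp add: qpoch_def)

lemma E_0[simp]: "E q n 0 = 1" by (simp add: E_def)
lemma E_Suc: "E q n (Suc k) = E q n k * (1 - q ^ (n - k))" by (simp add: E_def)
lemma E_zero: "n < k \<Longrightarrow> E q n k = 0"
  unfolding E_def by (rule prod_zero) (auto intro!: bexI[of _ n])
lemma E_Suc_Suc: "E q (Suc n) (Suc k) = (1 - q ^ Suc n) * E q n k"
  unfolding E_def prod.lessThan_Suc_shift by simp

lemma E_rec1: "E q (Suc n) (Suc k) = q ^ Suc k * E q n (Suc k) + (1 - q ^ Suc k) * E q n k"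
proof (cases "k \<le> n")
  case True
  have p: "q ^ Suc k * q ^ (n - k) = q ^ Suc n" using True by (simp flip: power_add)
  have "E q (Suc n) (Suc k) = (1 - q ^ Suc n) * E q n k" by (rule E_Suc_Suc)
  also have "\<dots> = (q ^ Suc k * (1 - q ^ (n - k)) + (1 - q ^ Suc k)) * E q n k"
    using p by (auto simp: algebra_simps)
  finally show ?thesis using p by (simp add: E_Suc algebra_simps)
next
  case False
  then show ?thesis by (simp add: E_Suc_Suc E_zero)
qed

lemma E_rec2: "E q (Suc n) (Suc k) = E q n (Suc k) + q ^ (n - k) * (1 - q ^ Suc k) * E q n k"
proof (cases "k \<le> n")
  case True
  have p: "q ^ (n - k) * q ^ Suc k = q ^ Suc n" using True by (simp flip: power_add)
  have "E q (Suc n) (Suc k) = (1 - q ^ Suc n) * E q n k" by (rule E_Suc_Suc)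
  also have "\<dots> = ((1 - q ^ (n - k)) + q ^ (n - k) * (1 - q ^ Suc k)) * E q n k"
    using p by (auto simp: algebra_simps)
  finally show ?thesis using p by (simp add: E_Suc algebra_simps)
next
  case False
  then show ?thesis by (simp add: E_Suc_Suc E_zero)
qed

lemma qq_E: "k \<le> n \<Longrightarrow> qpoch q q n = qpoch q q (n - k) * E q n k"
proof (induction k)
  case 0 then show ?case by simp
next
  case (Suc k)
  then have IH: "qpoch q q n = qpoch q q (n - k) * E q n k" by simp
  have nk: "n - k = Suc (n - Suc k)" using Suc.prems by simp
  have "q * q ^ (n - Suc k) = q ^ (n - k)" using nk by simp
  then show ?case using IH unfolding E_Suc by (simp add: nk qpoch_Suc algebra_simps)
qed

lemma G_rec:
  assumes Q: "\<And>m. qpoch q q m \<noteq> 0" and kL: "k < L"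
  shows "(1 - q ^ Suc k) * G q L (Suc k) = G q L k * (1 - q ^ (L - k))"
proof -
  define r where "r = L - Suc k"
  have e: "L - k = Suc r" "L - Suc k = r" using kL r_def by auto
  define u where "u = 1 - q ^ Suc k"
  define v where "v = 1 - q ^ Suc r"
  have u: "u \<noteq> 0" using Q[of "Suc k"] by (simp add: qpoch_Suc u_def)
  have v: "v \<noteq> 0" using Q[of "Suc r"] by (simp add: qpoch_Suc v_def)
  have g1: "G q L (Suc k) = qpoch q q L / (qpoch q q k * u * qpoch q q r)"
    using kL by (simp add: G_def e qpoch_Suc u_def)
  have g2: "G q L k = qpoch q q L / (qpoch q q k * (qpoch q q r * v))"
    using kL by (simp add: G_def e qpoch_Suc v_def)
  show ?thesis unfolding g1 g2 e u_def[symmetric] v_def[symmetric]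
    using u v Q[of k] Q[of r] by simp
qed

lemma ptB:
  assumes Q: "\<And>m. qpoch q q m \<noteq> 0"
  shows "G q L k * q^(2*(k choose 2)) * (a*q)^k * qpoch (a*q*q^k) q (L-k)
    = q^k * (G q L k * q^(2*(k choose 2)) * a^k * qpoch (a*q^k) q (L-k))
    + (1 - q^Suc k) * (G q L (Suc k) * q^(2*(Suc k choose 2)) * a^Suc k * qpoch (a*q^Suc k) q (L - Suc k))"
proof (cases "k < L")
  case True
  define r where "r = L - Suc k"
  have e: "L - k = Suc r" "L - Suc k = r" using True r_def by auto
  define P where "P = qpoch (a*q*q^k) q r"
  have f1: "qpoch (a*q*q^k) q (Suc r) = P * (1 - a*q*q^k*q^r)" by (simp add: P_def qpoch_Suc)
  have f2: "qpoch (a*q^k) q (Suc r) = (1 - a*q^k) * P"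
    by (simp add: P_def qpoch_Suc_left mult_ac)
  have f3: "qpoch (a*q^Suc k) q r = P" by (simp add: P_def mult_ac)
  have c: "Suc k choose 2 = (k choose 2) + k" by (simp add: numeral_2_eq_2)
  have gr: "(1 - q^Suc k) * (G q L (Suc k) * q^(2*(Suc k choose 2)) * a^Suc k * qpoch (a*q^Suc k) q (L - Suc k))
     = ((1 - q^Suc k) * G q L (Suc k)) * (q^(2*(Suc k choose 2)) * a^Suc k * qpoch (a*q^Suc k) q (L - Suc k))"
    by (simp only: mult_ac)
  have p2: "q^(2*((k choose 2) + k)) = q^(2*(k choose 2)) * q^k * q^k"
  proof -
    have ex: "2*((k choose 2) + k) = 2*(k choose 2) + k + k" by simp
    show ?thesis by (simp only: ex power_add)
  qed
  show ?thesis
    unfolding gr G_rec[OF Q True] unfolding e f1 f2 f3 c p2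
    by (simp add: algebra_simps power_mult_distrib)
next
  case False
  show ?thesis
  proof (cases "k = L")
    case True
    then show ?thesis by (simp add: G_def power_mult_distrib)
  next
    case False
    then show ?thesis using \<open>\<not> k < L\<close> by (simp add: G_def)
  qed
qed

lemma B:
  assumes Q: "\<And>m. qpoch q q m \<noteq> 0"
  shows "qpoch (a*q^n) q L = (\<Sum>k\<le>n. E q n k * (G q L k * q^(2*(k choose 2)) * a^k * qpoch (a*q^k) q (L-k)))"
proof (induction n arbitrary: a)
  case 0
  then show ?case using Q by (simp add: G_0 z2)
next
  case (Suc n)
  define T where "T = (\<lambda>a k. G q L k * q^(2*(k choose 2)) * a^k * qpoch (a*q^k) q (L-k))"
  have pt: "T (a*q) k = q^k * T a k + (1 - q^Suc k) * T a (Suc k)" for k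
    unfolding T_def using ptB[OF Q, of L k a] by simp
  have "qpoch (a*q^Suc n) q L = qpoch ((a*q)*q^n) q L" by (simp add: mult_ac)
  also have "\<dots> = (\<Sum>k\<le>n. E q n k * T (a*q) k)" unfolding T_def by (rule Suc.IH)
  also have "\<dots> = (\<Sum>k\<le>n. q^k * E q n k * T a k) + (\<Sum>k\<le>n. (1 - q^Suc k) * E q n k * T a (Suc k))"
    unfolding pt by (simp add: sum.distrib[symmetric] algebra_simps)
  also have "(\<Sum>k\<le>n. q^k * E q n k * T a k) = (\<Sum>k\<le>Suc n. q^k * E q n k * T a k)"
    by (simp add: E_zero)
  also have "\<dots> = T a 0 + (\<Sum>k\<le>n. q^Suc k * E q n (Suc k) * T a (Suc k))"
    by (subst sum.atMost_Suc_shift) simp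
  also have "T a 0 + (\<Sum>k\<le>n. q^Suc k * E q n (Suc k) * T a (Suc k)) + (\<Sum>k\<le>n. (1 - q^Suc k) * E q n k * T a (Suc k))
      = E q (Suc n) 0 * T a 0 + (\<Sum>k\<le>n. E q (Suc n) (Suc k) * T a (Suc k))"
    unfolding E_rec1 by (simp add: sum.distrib[symmetric] algebra_simps)
  also have "\<dots> = (\<Sum>k\<le>Suc n. E q (Suc n) k * T a k)"
    by (subst sum.atMost_Suc_shift) simp
  finally show ?case unfolding T_def .
qed

lemma ptB2:
  assumes Q: "\<And>m. qpoch q q m \<noteq> 0" and kn: "k \<le> n"
  shows "G q L k * q^(k choose 2) * (-a)^k * qpoch (a*q^n) q (L-k)
    = G q L k * q^(k choose 2) * (-a)^k * qpoch (a*q^Suc n) q (L-k)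
    + q^(n-k) * (1 - q^Suc k) * (G q L (Suc k) * q^(Suc k choose 2) * (-a)^Suc k * qpoch (a*q^Suc n) q (L - Suc k))"
proof (cases "k < L")
  case True
  define r where "r = L - Suc k"
  have e: "L - k = Suc r" "L - Suc k = r" using True r_def by auto
  define P where "P = qpoch (a*q^Suc n) q r"
  have f1: "qpoch (a*q^n) q (Suc r) = (1 - a*q^n) * P" by (simp add: P_def qpoch_Suc_left mult_ac)
  have f2: "qpoch (a*q^Suc n) q (Suc r) = P * (1 - a*q^Suc n*q^r)" by (simp add: P_def qpoch_Suc)
  have c: "q^(Suc k choose 2) = q^(k choose 2) * q^k" by (simp add: numeral_2_eq_2 power_add)
  have gr: "q^(n-k) * (1 - q^Suc k) * (G q L (Suc k) * q^(Suc k choose 2) * (-a)^Suc k * qpoch (a*q^Suc n) q (L - Suc k))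
     = ((1 - q^Suc k) * G q L (Suc k)) * (q^(n-k) * q^(Suc k choose 2) * (-a)^Suc k * qpoch (a*q^Suc n) q (L - Suc k))"
    by (simp only: mult_ac)
  have qn: "q^n = q^(n-k) * q^k" using kn by (simp flip: power_add)
  show ?thesis
    unfolding gr G_rec[OF Q True] unfolding e f1 f2 c P_def[symmetric]
    by (simp add: algebra_simps qn)
next
  case False
  show ?thesis
  proof (cases "k = L")
    case True
    then show ?thesis by (simp add: G_def)
  next
    case False
    then show ?thesis using \<open>\<not> k < L\<close> by (simp add: G_def)
  qed
qed

lemma B2:
  assumes Q: "\<And>m. qpoch q q m \<noteq> 0"
  shows "qpoch a q L = (\<Sum>k\<le>n. E q n k * (G q L k * q^(k choose 2) * (-a)^k * qpoch (a*q^n) q (L-k)))"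
proof (induction n)
  case 0
  then show ?case using Q by (simp add: G_0 z2)
next
  case (Suc n)
  define T where "T = (\<lambda>n k. G q L k * q^(k choose 2) * (-a)^k * qpoch (a*q^n) q (L-k))"
  have pt: "k \<le> n \<Longrightarrow> T n k = T (Suc n) k + q^(n-k) * (1 - q^Suc k) * T (Suc n) (Suc k)" for k
    unfolding T_def using ptB2[OF Q, of k n L a] by simp
  have "qpoch a q L = (\<Sum>k\<le>n. E q n k * T n k)" unfolding T_def by (rule Suc.IH)
  also have "\<dots> = (\<Sum>k\<le>n. E q n k * (T (Suc n) k + q^(n-k) * (1 - q^Suc k) * T (Suc n) (Suc k)))"
    by (rule sum.cong) (simp_all add: pt)
  also have "\<dots> = (\<Sum>k\<le>n. E q n k * T (Suc n) k) + (\<Sum>k\<le>n. q^(n-k) * (1 - q^Suc k) * E q n k * T (Suc n) (Suc k))"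
    by (simp add: sum.distrib[symmetric] algebra_simps)
  also have "(\<Sum>k\<le>n. E q n k * T (Suc n) k) = (\<Sum>k\<le>Suc n. E q n k * T (Suc n) k)"
    by (simp add: E_zero)
  also have "\<dots> = T (Suc n) 0 + (\<Sum>k\<le>n. E q n (Suc k) * T (Suc n) (Suc k))"
    by (subst sum.atMost_Suc_shift) simp
  also have "T (Suc n) 0 + (\<Sum>k\<le>n. E q n (Suc k) * T (Suc n) (Suc k)) + (\<Sum>k\<le>n. q^(n-k) * (1 - q^Suc k) * E q n k * T (Suc n) (Suc k))
      = E q (Suc n) 0 * T (Suc n) 0 + (\<Sum>k\<le>n. E q (Suc n) (Suc k) * T (Suc n) (Suc k))"
    unfolding E_rec2 by (simp add: sum.distrib[symmetric] algebra_simps)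
  also have "\<dots> = (\<Sum>k\<le>Suc n. E q (Suc n) k * T (Suc n) k)"
    by (subst sum.atMost_Suc_shift) simp
  finally show ?case unfolding T_def .
qed

lemma term_nth:
  "(fpsC2 s * fpsX2 ^ j * fpsY2 ^ i * F) $ M $ N = (if j \<le> M \<and> i \<le> N then s * F $ (M - j) $ (N - i) else 0)"
proof -
  have eq: "fpsC2 s * fpsX2 ^ j * fpsY2 ^ i * F = fps_const (fps_const s) * (fps_X ^ j * (fps_const (fps_X ^ i) * F))"
    by (simp add: mult_ac)
  show ?thesis unfolding eq
    by (simp add: fps_X_power_mult_nth)
qed

lemma Phi4_nth: "Phi4 q a b c c' u v $ m $ n = qpoch a q (m + n) * qpoch b q (m + n)
      / (qpoch q q m * qpoch q q n * qpoch c q m * qpoch c' q n) * u ^ m * v ^ n"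
  by (simp add: Phi4_def)

lemma qpoch_shift_nz:
  assumes "\<And>j. c * q ^ j \<noteq> 1" shows "qpoch (c * q ^ l) q m \<noteq> 0"
  by (rule qpoch_nz) (metis assms mult.assoc power_add)

lemma coeff:
  assumes Q: "\<And>m. qpoch q q m \<noteq> 0" and q0: "q \<noteq> 0"
    and hc: "\<And>j. c * q ^ j \<noteq> 1" and hc': "\<And>j. c' * q ^ j \<noteq> 1"
    and S: "\<And>k i. S k i = qbinom q n k * qbinom q k i * qpoch b q k / (qpoch c q (k - i) * qpoch c' q i) * w k"
  shows "(\<Sum>k\<le>n. \<Sum>i\<le>k. fpsC2 (S k i) * fpsX2 ^ (k - i) * fpsY2 ^ i
              * Phi4 q (A k) (b * q ^ k) (c * q ^ (k - i)) (c' * q ^ i) (q ^ i) 1) $ M $ N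
       = qpoch b q (M + N) / (qpoch q q M * qpoch q q N * qpoch c q M * qpoch c' q N)
         * (\<Sum>k\<le>n. E q n k * (G q (M + N) k * w k * qpoch (A k) q (M + N - k)))"
proof -
  define L where "L = M + N"
  define K where "K = qpoch b q L / (qpoch c q M * qpoch c' q N)"
  define inner where "inner = (\<lambda>k. \<Sum>i\<le>k. if k - i \<le> M \<and> i \<le> N then qbinom q k i * q ^ (i * (M - (k - i)))
            / (qpoch q q (M - (k - i)) * qpoch q q (N - i)) else 0)"
  have step1: "(\<Sum>k\<le>n. \<Sum>i\<le>k. fpsC2 (S k i) * fpsX2 ^ (k - i) * fpsY2 ^ i
              * Phi4 q (A k) (b * q ^ k) (c * q ^ (k - i)) (c' * q ^ i) (q ^ i) 1) $ M $ N
     = (\<Sum>k\<le>n. \<Sum>i\<le>k. K * (w k * qpoch (A k) q (L - k) * qbinom q n k) *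
          (if k - i \<le> M \<and> i \<le> N then qbinom q k i * q ^ (i * (M - (k - i)))
            / (qpoch q q (M - (k - i)) * qpoch q q (N - i)) else 0))"
    unfolding fps_sum_nth term_nth
  proof (intro sum.cong refl)
    fix k i assume "k \<in> {..n}" "i \<in> {..k}"
    then have ik: "i \<le> k" by simp
    show "(if k - i \<le> M \<and> i \<le> N then S k i * Phi4 q (A k) (b * q ^ k) (c * q ^ (k - i)) (c' * q ^ i) (q ^ i) 1 $ (M - (k - i)) $ (N - i) else 0)
       = K * (w k * qpoch (A k) q (L - k) * qbinom q n k) *
          (if k - i \<le> M \<and> i \<le> N then qbinom q k i * q ^ (i * (M - (k - i)))
            / (qpoch q q (M - (k - i)) * qpoch q q (N - i)) else 0)"
    proof (cases "k - i \<le> M \<and> i \<le> N")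
      case True
      define m where "m = M - (k - i)"
      define n' where "n' = N - i"
      have mn: "m + n' = L - k" using True ik unfolding m_def n'_def L_def by arith
      have kL: "k + (L - k) = L" using True ik unfolding L_def by arith
      have eb: "qpoch b q L = qpoch b q k * qpoch (b * q ^ k) q (L - k)"
        using qpoch_add[of b q k "L - k"] kL by simp
      have ec: "qpoch c q M = qpoch c q (k - i) * qpoch (c * q ^ (k - i)) q m"
        using qpoch_add[of c q "k - i" m] True by (simp add: m_def)
      have ec': "qpoch c' q N = qpoch c' q i * qpoch (c' * q ^ i) q n'"
        using qpoch_add[of c' q i n'] True by (simp add: n'_def)
      have nz: "qpoch c q (k - i) \<noteq> 0" "qpoch (c * q ^ (k - i)) q m \<noteq> 0"
        "qpoch c' q i \<noteq> 0" "qpoch (c' * q ^ i) q n' \<noteq> 0"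
        "qpoch q q m \<noteq> 0" "qpoch q q n' \<noteq> 0" "qpoch q q k \<noteq> 0" "qpoch q q i \<noteq> 0"
        "qpoch q q (k - i) \<noteq> 0" "qpoch q q n \<noteq> 0" "qpoch q q (n - k) \<noteq> 0"
        using qpoch_nz[OF hc] qpoch_nz[OF hc'] qpoch_shift_nz[OF hc] qpoch_shift_nz[OF hc'] Q by auto
      have pw: "q ^ (i * m) = (q ^ i) ^ m" by (simp add: power_mult)
      show ?thesis
        unfolding Phi4_nth S K_def m_def[symmetric] n'_def[symmetric] mn eb ec ec' pw
        using True nz by (simp add: field_simps)
    qed auto
  qed
  also have "\<dots> = K * (\<Sum>k\<le>n. (w k * qpoch (A k) q (L - k) * qbinom q n k) * inner k)"
    unfolding inner_def by (simp add: sum_distrib_left mult.assoc)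
  also have "\<dots> = K * (\<Sum>k\<le>n. (w k * qpoch (A k) q (L - k) * qbinom q n k) * (qpoch q q k * G q L k / (qpoch q q M * qpoch q q N)))"
    unfolding inner_def L_def vand[OF Q q0] ..
  also have "\<dots> = K / (qpoch q q M * qpoch q q N) * (\<Sum>k\<le>n. E q n k * (G q L k * w k * qpoch (A k) q (L - k)))"
  proof -
    have pt: "(w k * qpoch (A k) q (L - k) * qbinom q n k) * (qpoch q q k * G q L k / (qpoch q q M * qpoch q q N))
        = 1 / (qpoch q q M * qpoch q q N) * (E q n k * (G q L k * w k * qpoch (A k) q (L - k)))" if "k \<in> {..n}" for k
    proof -
      have kn: "k \<le> n" using that by simp
      have "qbinom q n k * qpoch q q k = E q n k"
        using qq_E[OF kn, of q] Q[of k] Q[of "n - k"] by (simp add: qbinom_def)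
      then show ?thesis using Q[of M] Q[of N]
        by (simp add: field_simps)
    qed
    have "(\<Sum>k\<le>n. (w k * qpoch (A k) q (L - k) * qbinom q n k) * (qpoch q q k * G q L k / (qpoch q q M * qpoch q q N)))
        = (\<Sum>k\<le>n. 1 / (qpoch q q M * qpoch q q N) * (E q n k * (G q L k * w k * qpoch (A k) q (L - k))))"
      by (rule sum.cong[OF refl]) (rule pt)
    then show ?thesis by (auto simp add: sum_divide_distrib[symmetric])
  qed
  finally show ?thesis by (simp add: K_def L_def field_simps)
qed

theorem theorem15:
  fixes q a b c c' :: complex and n :: nat
  assumes "0 < norm q" and "norm q < 1"
    and "\<And>j. c * q ^ j \<noteq> 1" and "\<And>j. c' * q ^ j \<noteq> 1"
  shows "(Phi4 q (a * q ^ n) b c c' 1 1 =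
           (\<Sum>k\<le>n. \<Sum>i\<le>k.
              fpsC2 (qbinom q n k * qbinom q k i * qpoch b q k
                     / (qpoch c q (k - i) * qpoch c' q i)
                     * q ^ (2 * (k choose 2)) * a ^ k)
              * fpsX2 ^ (k - i) * fpsY2 ^ i
              * Phi4 q (a * q ^ k) (b * q ^ k) (c * q ^ (k - i)) (c' * q ^ i) (q ^ i) 1))
       \<and> (Phi4 q (a * q powi (- int n)) b c c' 1 1 =
           (\<Sum>k\<le>n. \<Sum>i\<le>k.
              fpsC2 (qbinom q n k * qbinom q k i * qpoch b q k
                     / (qpoch c q (k - i) * qpoch c' q i)
                     * q powi (int (k choose 2) - int n * int k) * (- a) ^ k)
              * fpsX2 ^ (k - i) * fpsY2 ^ i
              * Phi4 q a (b * q ^ k) (c * q ^ (k - i)) (c' * q ^ i) (q ^ i) 1))"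
proof -
  have q0: "q \<noteq> 0" using assms(1) by auto
  have Q: "\<And>m. qpoch q q m \<noteq> 0" using qq_nz assms(2) by blast
  have hc: "\<And>j. c * q ^ j \<noteq> 1" and hc': "\<And>j. c' * q ^ j \<noteq> 1" using assms(3,4) by auto
  have first: "Phi4 q (a * q ^ n) b c c' 1 1 =
           (\<Sum>k\<le>n. \<Sum>i\<le>k.
              fpsC2 (qbinom q n k * qbinom q k i * qpoch b q k
                     / (qpoch c q (k - i) * qpoch c' q i)
                     * q ^ (2 * (k choose 2)) * a ^ k)
              * fpsX2 ^ (k - i) * fpsY2 ^ i
              * Phi4 q (a * q ^ k) (b * q ^ k) (c * q ^ (k - i)) (c' * q ^ i) (q ^ i) 1)"
  proof (rule fps_ext, rule fps_ext)
    fix M N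
    have "(\<Sum>k\<le>n. \<Sum>i\<le>k.
              fpsC2 (qbinom q n k * qbinom q k i * qpoch b q k
                     / (qpoch c q (k - i) * qpoch c' q i)
                     * q ^ (2 * (k choose 2)) * a ^ k)
              * fpsX2 ^ (k - i) * fpsY2 ^ i
              * Phi4 q (a * q ^ k) (b * q ^ k) (c * q ^ (k - i)) (c' * q ^ i) (q ^ i) 1) $ M $ N
       = qpoch b q (M + N) / (qpoch q q M * qpoch q q N * qpoch c q M * qpoch c' q N)
         * (\<Sum>k\<le>n. E q n k * (G q (M + N) k * (q ^ (2 * (k choose 2)) * a ^ k) * qpoch (a * q ^ k) q (M + N - k)))"
      by (rule coeff[OF Q q0 hc hc']) (simp add: mult.assoc)
    also have "(\<Sum>k\<le>n. E q n k * (G q (M + N) k * (q ^ (2 * (k choose 2)) * a ^ k) * qpoch (a * q ^ k) q (M + N - k)))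
        = qpoch (a * q ^ n) q (M + N)"
      unfolding B[OF Q, of a n "M + N"] by (simp add: mult.assoc)
    finally show "Phi4 q (a * q ^ n) b c c' 1 1 $ M $ N = (\<Sum>k\<le>n. \<Sum>i\<le>k.
              fpsC2 (qbinom q n k * qbinom q k i * qpoch b q k
                     / (qpoch c q (k - i) * qpoch c' q i)
                     * q ^ (2 * (k choose 2)) * a ^ k)
              * fpsX2 ^ (k - i) * fpsY2 ^ i
              * Phi4 q (a * q ^ k) (b * q ^ k) (c * q ^ (k - i)) (c' * q ^ i) (q ^ i) 1) $ M $ N"
      unfolding Phi4_nth by (simp add: mult_ac)
  qed
  define a' where "a' = a * q powi (- int n)"
  have a'q: "a' * q ^ n = a" using q0 by (simp add: a'_def power_int_minus)
  have w: "q powi (int (k choose 2) - int n * int k) * (- a) ^ k = q ^ (k choose 2) * (- a') ^ k" for k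
  proof -
    have "q powi (int (k choose 2) - int n * int k) = q ^ (k choose 2) / q ^ (n * k)"
      using q0 by (simp add: power_int_diff flip: of_nat_mult)
    moreover have "(- a') ^ k = (- a) ^ k / q ^ (n * k)"
    proof -
      have "- a' = (- a) / q ^ n" using q0 by (simp add: a'_def power_int_minus divide_inverse)
      then have "(- a') ^ k = (- a) ^ k / (q ^ n) ^ k" by (simp only: power_divide)
      then show ?thesis by (simp add: power_mult)
    qed
    ultimately show ?thesis by simp
  qed
  have second: "Phi4 q a' b c c' 1 1 =
           (\<Sum>k\<le>n. \<Sum>i\<le>k.
              fpsC2 (qbinom q n k * qbinom q k i * qpoch b q k
                     / (qpoch c q (k - i) * qpoch c' q i)
                     * q powi (int (k choose 2) - int n * int k) * (- a) ^ k)
              * fpsX2 ^ (k - i) * fpsY2 ^ i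
              * Phi4 q a (b * q ^ k) (c * q ^ (k - i)) (c' * q ^ i) (q ^ i) 1)"
  proof (rule fps_ext, rule fps_ext)
    fix M N
    have "(\<Sum>k\<le>n. \<Sum>i\<le>k.
              fpsC2 (qbinom q n k * qbinom q k i * qpoch b q k
                     / (qpoch c q (k - i) * qpoch c' q i)
                     * q powi (int (k choose 2) - int n * int k) * (- a) ^ k)
              * fpsX2 ^ (k - i) * fpsY2 ^ i
              * Phi4 q ((\<lambda>_. a) k) (b * q ^ k) (c * q ^ (k - i)) (c' * q ^ i) (q ^ i) 1) $ M $ N
       = qpoch b q (M + N) / (qpoch q q M * qpoch q q N * qpoch c q M * qpoch c' q N)
         * (\<Sum>k\<le>n. E q n k * (G q (M + N) k * (q powi (int (k choose 2) - int n * int k) * (- a) ^ k) * qpoch ((\<lambda>_. a) k) q (M + N - k)))"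
      by (rule coeff[OF Q q0 hc hc']) (simp add: mult.assoc)
    also have "(\<Sum>k\<le>n. E q n k * (G q (M + N) k * (q powi (int (k choose 2) - int n * int k) * (- a) ^ k) * qpoch ((\<lambda>_. a) k) q (M + N - k)))
        = qpoch a' q (M + N)"
      unfolding B2[OF Q, of a' "M + N" n] w a'q by (simp add: mult.assoc)
    finally show "Phi4 q a' b c c' 1 1 $ M $ N = (\<Sum>k\<le>n. \<Sum>i\<le>k.
              fpsC2 (qbinom q n k * qbinom q k i * qpoch b q k
                     / (qpoch c q (k - i) * qpoch c' q i)
                     * q powi (int (k choose 2) - int n * int k) * (- a) ^ k)
              * fpsX2 ^ (k - i) * fpsY2 ^ i
              * Phi4 q a (b * q ^ k) (c * q ^ (k - i)) (c' * q ^ i) (q ^ i) 1) $ M $ N"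
      unfolding Phi4_nth by (simp add: mult_ac)
  qed
  show ?thesis using first second unfolding a'_def by blast
qed

end
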